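(* Let $X$ be a hereditarily Baire metric space, $Y$ a metric space and $f\colon X\to Y$. Then the following are equivalent: $f$ has the generalized Lebesgue property; $f$ is weakly separated; $f$ has the LTZ property; $f$ has (PCP); $f$ is Borel 1; $f$ is fragmentable. Moreover, if $X$ or $Y$ is separable, each of these is also equivalent to: $f$ has the Lebesgue property.
   Context: Let $X$ be a topological space, $(Y,d)$ a metric space and $f\colon X\to Y$. A neighborhood assignment is a family $\{V_x\}_{x\in X}$ of open subsets of $X$ with $x\in V_x$ for every $x$. A family of subsets of $X$ is discrete if every point of $X$ has a neighborhood meeting at most one member of the family; it is $\sigma$-discrete if it is a countable union of discrete families. The function $f$ is called: weakly separated if for every $\varepsilon>0$ there is a neighborhood assignment $\{V_x\}_{x\in X}$ such that for all $x,y\in X$, $(x,y)\in V_y\times V_x$ implies $d(f(x),f(y))<\varepsilon$; fragmentable if for every $\varepsilon>0$ and every nonempty closed $F\subseteq X$ there is an open $U$ with $U\cap F\neq\emptyset$ and $\operatorname{diam} f(U\cap F)<\varepsilon$; said to have the Lebesgue property if for every $\varepsilon>0$ there are closed sets $X_n$ ($n\in\mathbb N$) with $X=\bigcup_n X_n$ and $\operatorname{diam} f(X_n)\le\varepsilon$ for all $n$; said to have the generalized Lebesgue property if for every $\varepsilon>0$ there is a $\sigma$-discrete family $\mathcal A_\varepsilon$ of closed subsets of $X$ with $X=\bigcup\mathcal A_\varepsilon$ and $\operatorname{diam} f(A)\le\varepsilon$ for all $A\in\mathcal A_\varepsilon$; said to have (PCP) if for every nonempty closed $F\subseteq X$ the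 restriction $f|_F$ has a point of continuity; Borel 1 if $f^{-1}(V)$ is an $F_\sigma$ set in $X$ for every open $V\subseteq Y$. A space is Baire if every nonempty open subset of it is nonmeager in it; it is hereditarily Baire if every nonempty closed subspace is a Baire space. When $X$ carries a metric $\varrho$, $f$ has the LTZ property if for every $\varepsilon>0$ there is $\delta_\varepsilon\colon X\to(0,\infty)$ such that for all $x,y\in X$, $\varrho(x,y)<\min\{\delta_\varepsilon(x),\delta_\varepsilon(y)\}$ implies $d(f(x),f(y))<\varepsilon$. *)

theory Defs
  imports "HOL-Analysis.Analysis"
begin

definition nowhere_dense_in :: "'a::topological_space set \<Rightarrow> 'a set \<Rightarrow> bool" where
  "nowhere_dense_in F N \<longleftrightarrow> N \<subseteq> F \<and>
     (\<forall>U. openin (top_of_set F) U \<and> U \<subseteq> (top_of_set F) closure_of N \<longrightarrow> U = {})"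

definition meager_in :: "'a::topological_space set \<Rightarrow> 'a set \<Rightarrow> bool" where
  "meager_in F S \<longleftrightarrow> (\<exists>N::nat \<Rightarrow> 'a set. (\<forall>n. nowhere_dense_in F (N n)) \<and> S \<subseteq> \<Union>(range N))"

definition baire_subspace :: "'a::topological_space set \<Rightarrow> bool" where
  "baire_subspace F \<longleftrightarrow> (\<forall>U. openin (top_of_set F) U \<and> U \<noteq> {} \<longrightarrow> \<not> meager_in F U)"

definition hereditarily_baire :: "'a::topological_space itself \<Rightarrow> bool" where
  "hereditarily_baire _ \<longleftrightarrow> (\<forall>F::'a set. closed F \<and> F \<noteq> {} \<longrightarrow> baire_subspace F)"

definition discrete_family :: "'a::topological_space set set \<Rightarrow> bool" where
  "discrete_family \<A> \<longleftrightarrow> (\<forall>x. \<exists>U. open U \<and> x \<in> U \<and>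
      (\<forall>A\<in>\<A>. \<forall>B\<in>\<A>. A \<inter> U \<noteq> {} \<and> B \<inter> U \<noteq> {} \<longrightarrow> A = B))"

definition sigma_discrete :: "'a::topological_space set set \<Rightarrow> bool" where
  "sigma_discrete \<A> \<longleftrightarrow> (\<exists>\<D>::nat \<Rightarrow> 'a set set. (\<forall>n. discrete_family (\<D> n)) \<and> \<A> = \<Union>(range \<D>))"

definition weakly_separated :: "('a::topological_space \<Rightarrow> 'b::metric_space) \<Rightarrow> bool" where
  "weakly_separated f \<longleftrightarrow> (\<forall>\<epsilon>>0. \<exists>V::'a \<Rightarrow> 'a set. (\<forall>x. open (V x) \<and> x \<in> V x) \<and>
      (\<forall>x y. x \<in> V y \<and> y \<in> V x \<longrightarrow> dist (f x) (f y) < \<epsilon>))"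

definition fragmentable :: "('a::topological_space \<Rightarrow> 'b::metric_space) \<Rightarrow> bool" where
  "fragmentable f \<longleftrightarrow> (\<forall>\<epsilon>>0. \<forall>F. closed F \<and> F \<noteq> {} \<longrightarrow>
      (\<exists>U. open U \<and> U \<inter> F \<noteq> {} \<and> bounded (f ` (U \<inter> F)) \<and> diameter (f ` (U \<inter> F)) < \<epsilon>))"

definition lebesgue_property :: "('a::topological_space \<Rightarrow> 'b::metric_space) \<Rightarrow> bool" where
  "lebesgue_property f \<longleftrightarrow> (\<forall>\<epsilon>>0. \<exists>X::nat \<Rightarrow> 'a set. (\<forall>n. closed (X n)) \<and> \<Union>(range X) = UNIV \<and>
      (\<forall>n. bounded (f ` X n) \<and> diameter (f ` X n) \<le> \<epsilon>))"

definition gen_lebesgue_property :: "('a::topological_space \<Rightarrow> 'b::metric_space) \<Rightarrow> bool" where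
  "gen_lebesgue_property f \<longleftrightarrow> (\<forall>\<epsilon>>0. \<exists>\<A>::'a set set. sigma_discrete \<A> \<and> (\<forall>A\<in>\<A>. closed A) \<and>
      \<Union>\<A> = UNIV \<and> (\<forall>A\<in>\<A>. bounded (f ` A) \<and> diameter (f ` A) \<le> \<epsilon>))"

definition PCP :: "('a::metric_space \<Rightarrow> 'b::topological_space) \<Rightarrow> bool" where
  "PCP f \<longleftrightarrow> (\<forall>F. closed F \<and> F \<noteq> {} \<longrightarrow> (\<exists>x\<in>F. continuous (at x within F) f))"

definition borel1 :: "('a::topological_space \<Rightarrow> 'b::topological_space) \<Rightarrow> bool" where
  "borel1 f \<longleftrightarrow> (\<forall>V. open V \<longrightarrow> fsigma (f -` V))"

definition LTZ :: "('a::metric_space \<Rightarrow> 'b::metric_space) \<Rightarrow> bool" where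
  "LTZ f \<longleftrightarrow> (\<forall>\<epsilon>>0. \<exists>\<delta>::'a \<Rightarrow> real. (\<forall>x. \<delta> x > 0) \<and>
      (\<forall>x y. dist x y < min (\<delta> x) (\<delta> y) \<longrightarrow> dist (f x) (f y) < \<epsilon>))"

end

theory Submission
  imports Defs
begin

lemma arch1: "0 < (e::real) \<Longrightarrow> \<exists>n. 1 / real (Suc n) < e"
  using reals_Archimedean[of e] by (simp add: inverse_eq_divide)

lemma diam_bound:
  fixes S :: "'a::metric_space set"
  assumes "\<And>x y. x \<in> S \<Longrightarrow> y \<in> S \<Longrightarrow> dist x y \<le> d" "0 \<le> d"
  shows "bounded S \<and> diameter S \<le> d"
proof (cases "S = {}")
  case True then show ?thesis using assms by simp
next
  case False
  then obtain s where s: "s \<in> S" by blast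
  have "S \<subseteq> cball s d" using assms(1)[OF s] by (auto simp: mem_cball)
  hence "bounded S" using bounded_cball bounded_subset by blast
  moreover have "diameter S \<le> d"
    unfolding diameter_def using False assms(1)
    by (auto intro!: cSUP_least)
  ultimately show ?thesis by blast
qed

lemma discrete_family_subset: "discrete_family A \<Longrightarrow> B \<subseteq> A \<Longrightarrow> discrete_family B"
  unfolding discrete_family_def by (meson subsetD)

lemma discrete_familyD:
  assumes "discrete_family \<A>"
  obtains U where "open U" "x \<in> U" "\<forall>A\<in>\<A>. \<forall>B\<in>\<A>. A \<inter> U \<noteq> {} \<and> B \<inter> U \<noteq> {} \<longrightarrow> A = B"
proof -
  have "\<exists>U. open U \<and> x \<in> U \<and> (\<forall>A\<in>\<A>. \<forall>B\<in>\<A>. A \<inter> U \<noteq> {} \<and> B \<inter> U \<noteq> {} \<longrightarrow> A = B)"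
    using assms unfolding discrete_family_def by (rule spec)
  then show thesis using that by (elim exE conjE)
qed

lemma discrete_family_closed_Union:
  assumes "discrete_family \<A>" "\<And>A. A \<in> \<A> \<Longrightarrow> closed A"
  shows "closed (\<Union>\<A>)"
proof -
  have "open (- \<Union>\<A>)"
  proof (subst open_subopen, intro ballI)
    fix x assume x: "x \<in> - \<Union>\<A>"
    obtain U where U: "open U" "x \<in> U" "\<forall>A\<in>\<A>. \<forall>B\<in>\<A>. A \<inter> U \<noteq> {} \<and> B \<inter> U \<noteq> {} \<longrightarrow> A = B"
      by (rule discrete_familyD[OF assms(1)])
    show "\<exists>T. open T \<and> x \<in> T \<and> T \<subseteq> - \<Union>\<A>"
    proof (cases "\<exists>A\<in>\<A>. A \<inter> U \<noteq> {}")
      case True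
      then obtain A where A: "A \<in> \<A>" "A \<inter> U \<noteq> {}" by blast
      show ?thesis
      proof (intro exI conjI)
        show "open (U - A)" by (rule open_Diff[OF U(1) assms(2)[OF A(1)]])
        show "x \<in> U - A" using x U(2) A(1) by blast
        show "U - A \<subseteq> - \<Union>\<A>"
        proof
          fix y assume y: "y \<in> U - A"
          show "y \<in> - \<Union>\<A>"
          proof
            assume "y \<in> \<Union>\<A>"
            then obtain B where B: "B \<in> \<A>" "y \<in> B" by blast
            hence "B \<inter> U \<noteq> {}" using y by blast
            hence "B = A" using U(3) A B(1) by blast
            thus False using y B(2) by blast
          qed
        qed
      qed
    next
      case False
      then show ?thesis using U by blast
    qed
  qed
  thus ?thesis by (simp add: closed_def)
qed

lemma baire_cover:
  fixes N :: "'i::countable \<Rightarrow> 'a::metric_space set"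
  assumes HB: "hereditarily_baire TYPE('a)" and M: "closed M" "M \<noteq> {}"
    and N: "\<And>i. closed (N i)" and cov: "M \<subseteq> (\<Union>i. N i)"
  shows "\<exists>i G. open G \<and> G \<inter> M \<noteq> {} \<and> G \<inter> M \<subseteq> N i"
proof (rule ccontr)
  assume neg: "\<not> ?thesis"
  define N' where "N' n = N (from_nat n) \<inter> M" for n
  have nd: "nowhere_dense_in M (N' n)" for n
    unfolding nowhere_dense_in_def
  proof (intro conjI allI impI)
    show "N' n \<subseteq> M" by (auto simp: N'_def)
    fix U assume U: "openin (top_of_set M) U \<and> U \<subseteq> top_of_set M closure_of N' n"
    have "closedin (top_of_set M) (N' n)" unfolding N'_def
      using closedin_closed_Int[OF N, of M] by (simp add: Int_commute)
    hence "top_of_set M closure_of N' n = N' n" by (simp add: closure_of_eq)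
    with U have sub: "U \<subseteq> N' n" by simp
    from U obtain G where G: "open G" "U = M \<inter> G" using openin_open by metis
    show "U = {}" using neg G sub unfolding N'_def by blast
  qed
  have "meager_in M M" unfolding meager_in_def
  proof (intro exI conjI allI)
    show "nowhere_dense_in M (N' n)" for n by (rule nd)
    show "M \<subseteq> \<Union>(range N')"
    proof
      fix x assume x: "x \<in> M"
      then obtain i where "x \<in> N i" using cov by blast
      hence "x \<in> N' (to_nat i)" using x by (simp add: N'_def)
      thus "x \<in> \<Union>(range N')" by blast
    qed
  qed
  moreover have "baire_subspace M" using HB M unfolding hereditarily_baire_def by blast
  ultimately show False unfolding baire_subspace_def using M(2) by auto
qed

lemma fsigma_E: "fsigma S \<Longrightarrow> \<exists>C::nat \<Rightarrow> 'a::topological_space set. (\<forall>j. closed (C j)) \<and> S = \<Union>(range C)"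
  by (induction rule: fsigma.induct) auto


lemma half_inv: "1 / (x::real) = 2 * (1 / (2 * x))"
  by (cases "x = 0") (simp_all add: field_simps)

lemma GL_D:
  fixes f :: "'a::topological_space \<Rightarrow> 'b::metric_space"
  assumes "gen_lebesgue_property f" "\<epsilon> > 0"
  obtains D :: "nat \<Rightarrow> 'a set set" where "\<And>n. discrete_family (D n)" "\<And>n A. A \<in> D n \<Longrightarrow> closed A"
    "\<And>x. \<exists>n. \<exists>A\<in>D n. x \<in> A" "\<And>n A. A \<in> D n \<Longrightarrow> bounded (f ` A) \<and> diameter (f ` A) \<le> \<epsilon>"
proof -
  have "\<exists>\<A>::'a set set. sigma_discrete \<A> \<and> (\<forall>A\<in>\<A>. closed A) \<and> \<Union>\<A> = UNIV \<and> (\<forall>A\<in>\<A>. bounded (f ` A) \<and> diameter (f ` A) \<le> \<epsilon>)"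
    by (rule assms(1)[unfolded gen_lebesgue_property_def, rule_format, OF assms(2)])
  then obtain \<A> :: "'a set set" where h: "sigma_discrete \<A> \<and> (\<forall>A\<in>\<A>. closed A) \<and> \<Union>\<A> = UNIV \<and> (\<forall>A\<in>\<A>. bounded (f ` A) \<and> diameter (f ` A) \<le> \<epsilon>)"
    by (rule exE)
  have h1: "sigma_discrete \<A>" using h by (rule conjunct1)
  have h2: "\<forall>A\<in>\<A>. closed A" using h by simp
  have h3: "\<Union>\<A> = UNIV" using h by simp
  have h4: "\<forall>A\<in>\<A>. bounded (f ` A) \<and> diameter (f ` A) \<le> \<epsilon>" using h by simp
  have "\<exists>D::nat \<Rightarrow> 'a set set. (\<forall>n. discrete_family (D n)) \<and> \<A> = \<Union>(range D)"
    using h1 unfolding sigma_discrete_def .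
  then obtain D :: "nat \<Rightarrow> 'a set set" where D: "(\<forall>n. discrete_family (D n)) \<and> \<A> = \<Union>(range D)"
    by (rule exE)
  have D1: "\<And>n. discrete_family (D n)" using D by simp
  have D2: "\<And>n A. A \<in> D n \<Longrightarrow> A \<in> \<A>" using D by auto
  show thesis
  proof (rule that)
    show "discrete_family (D n)" for n by (rule D1)
    show "closed A" if "A \<in> D n" for n A using h2 D2[OF that] by simp
    show "bounded (f ` A) \<and> diameter (f ` A) \<le> \<epsilon>" if "A \<in> D n" for n A using h4 D2[OF that] by simp
    show "\<exists>n. \<exists>A\<in>D n. x \<in> A" for x
    proof -
      have "x \<in> \<Union>\<A>" using h3 by simp
      then obtain A where A: "A \<in> \<A>" "x \<in> A" by (rule UnionE)
      then have "A \<in> \<Union>(range D)" using D by simp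
      then obtain n where "A \<in> D n" by auto
      thus ?thesis using A(2) by auto
    qed
  qed
qed

lemma GL_WS:
  fixes f :: "'a::topological_space \<Rightarrow> 'b::metric_space"
  assumes GL: "gen_lebesgue_property f" shows "weakly_separated f"
  unfolding weakly_separated_def
proof (intro allI impI)
  fix \<epsilon>::real assume ep: "\<epsilon> > 0"
  then have ep2: "\<epsilon>/2 > 0" by simp
  obtain D :: "nat \<Rightarrow> 'a set set" where D1: "\<And>n. discrete_family (D n)" and D2: "\<And>n A. A \<in> D n \<Longrightarrow> closed A"
    and D3: "\<And>x. \<exists>n. \<exists>A\<in>D n. x \<in> A" and D4: "\<And>n A. A \<in> D n \<Longrightarrow> bounded (f ` A) \<and> diameter (f ` A) \<le> \<epsilon>/2"
    by (rule GL_D[OF GL ep2]) blast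
  define lev where "lev x = (LEAST n. \<exists>A\<in>D n. x \<in> A)" for x
  have lev: "\<exists>A\<in>D (lev x). x \<in> A" for x unfolding lev_def by (rule LeastI_ex[OF D3])
  have lev_min: "x \<notin> A" if "k < lev x" "A \<in> D k" for x k A
  proof
    assume "x \<in> A"
    hence "\<exists>A\<in>D k. x \<in> A" using that(2) by blast
    hence "lev x \<le> k" unfolding lev_def by (rule Least_le)
    thus False using that(1) by simp
  qed
  define Low where "Low n = (\<Union>k\<in>{..<n}. \<Union>(D k))" for n
  have Low_closed: "closed (Low n)" for n
  proof -
    have "closed (\<Union>(D k))" for k by (rule discrete_family_closed_Union[OF D1 D2])
    then show ?thesis unfolding Low_def by (intro closed_UN) auto
  qed
  have Low_iff: "x \<in> Low n \<longleftrightarrow> (\<exists>k<n. \<exists>A\<in>D k. x \<in> A)" for x n unfolding Low_def by auto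
  have "\<forall>x. \<exists>U. open U \<and> x \<in> U \<and> (\<forall>A\<in>D (lev x). \<forall>B\<in>D (lev x). A \<inter> U \<noteq> {} \<and> B \<inter> U \<noteq> {} \<longrightarrow> A = B)"
  proof
    fix x
    obtain U where "open U" "x \<in> U" "\<forall>A\<in>D (lev x). \<forall>B\<in>D (lev x). A \<inter> U \<noteq> {} \<and> B \<inter> U \<noteq> {} \<longrightarrow> A = B"
      by (rule discrete_familyD[OF D1])
    then show "\<exists>U. open U \<and> x \<in> U \<and> (\<forall>A\<in>D (lev x). \<forall>B\<in>D (lev x). A \<inter> U \<noteq> {} \<and> B \<inter> U \<noteq> {} \<longrightarrow> A = B)"
      by (intro exI[of _ U] conjI)
  qed
  from choice[OF this] obtain U where U0: "\<forall>x. open (U x) \<and> x \<in> U x \<and>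
    (\<forall>A\<in>D (lev x). \<forall>B\<in>D (lev x). A \<inter> U x \<noteq> {} \<and> B \<inter> U x \<noteq> {} \<longrightarrow> A = B)"
    by (rule exE)
  have U1: "\<And>x. open (U x)" and U2: "\<And>x. x \<in> U x"
    and U3: "\<And>x. \<forall>A\<in>D (lev x). \<forall>B\<in>D (lev x). A \<inter> U x \<noteq> {} \<and> B \<inter> U x \<noteq> {} \<longrightarrow> A = B"
    using U0 by simp_all
  define V where "V x = U x - Low (lev x)" for x
  show "\<exists>V::'a \<Rightarrow> 'a set. (\<forall>x. open (V x) \<and> x \<in> V x) \<and> (\<forall>x y. x \<in> V y \<and> y \<in> V x \<longrightarrow> dist (f x) (f y) < \<epsilon>)"
  proof (intro exI[of _ V] conjI allI impI)
    fix x
    show "open (V x)" unfolding V_def by (rule open_Diff[OF U1 Low_closed])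
    have "x \<notin> Low (lev x)" using lev_min by (auto simp: Low_iff)
    thus "x \<in> V x" using U2[of x] unfolding V_def by simp
  next
    fix x y assume xy: "x \<in> V y \<and> y \<in> V x"
    have xy1: "x \<in> U y" "x \<notin> Low (lev y)" "y \<in> U x" "y \<notin> Low (lev x)" using xy unfolding V_def by simp_all
    have "\<not> lev x < lev y"
    proof
      assume "lev x < lev y"
      hence "x \<in> Low (lev y)" using lev[of x] by (auto simp: Low_iff)
      thus False using xy1 by simp
    qed
    moreover have "\<not> lev y < lev x"
    proof
      assume "lev y < lev x"
      hence "y \<in> Low (lev x)" using lev[of y] by (auto simp: Low_iff)
      thus False using xy1 by simp
    qed
    ultimately have eq: "lev x = lev y" by simp
    obtain Ax where Ax: "Ax \<in> D (lev x)" "x \<in> Ax" using lev[of x] by (rule bexE)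
    obtain Ay where Ay: "Ay \<in> D (lev y)" "y \<in> Ay" using lev[of y] by (rule bexE)
    have AxD: "Ax \<in> D (lev y)" using Ax(1) eq by simp
    have c1: "Ax \<inter> U y \<noteq> {}" using Ax(2) xy1(1) by blast
    have c2: "Ay \<inter> U y \<noteq> {}" using Ay(2) U2[of y] by blast
    have AA: "Ax = Ay" using U3[of y, rule_format, OF AxD Ay(1) conjI[OF c1 c2]] .
    have "dist (f x) (f y) \<le> diameter (f ` Ax)"
      using D4[OF Ax(1)] Ax(2) Ay(2) AA by (intro diameter_bounded_bound) auto
    also have "\<dots> \<le> \<epsilon>/2" using D4[OF Ax(1)] by simp
    finally show "dist (f x) (f y) < \<epsilon>" using ep by linarith
  qed
qed

lemma WS_LTZ:
  fixes f :: "'a::metric_space \<Rightarrow> 'b::metric_space"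
  assumes "weakly_separated f" shows "LTZ f"
  unfolding LTZ_def
proof (intro allI impI)
  fix \<epsilon>::real assume "\<epsilon> > 0"
  then obtain V where V: "\<forall>x. open (V x) \<and> x \<in> V x" "\<forall>x y. x \<in> V y \<and> y \<in> V x \<longrightarrow> dist (f x) (f y) < \<epsilon>"
    using assms unfolding weakly_separated_def by blast
  have "\<forall>x. \<exists>d. d > 0 \<and> ball x d \<subseteq> V x" using V(1) open_contains_ball by blast
  from choice[OF this] obtain d :: "'a \<Rightarrow> real" where d0: "\<forall>x. d x > 0 \<and> ball x (d x) \<subseteq> V x" by (rule exE)
  have d: "\<And>x. d x > 0" "\<And>x. ball x (d x) \<subseteq> V x" using d0 by simp_all
  show "\<exists>\<delta>::'a \<Rightarrow> real. (\<forall>x. \<delta> x > 0) \<and> (\<forall>x y. dist x y < min (\<delta> x) (\<delta> y) \<longrightarrow> dist (f x) (f y) < \<epsilon>)"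
  proof (intro exI conjI allI impI)
    show "d x > 0" for x by (rule d(1))
    fix x y assume "dist x y < min (d x) (d y)"
    hence "y \<in> V x" "x \<in> V y" using d(2)[of x] d(2)[of y] by (auto simp: dist_commute subset_iff)
    thus "dist (f x) (f y) < \<epsilon>" using V(2) by blast
  qed
qed

lemma stone_cover:
  fixes r :: real
  assumes "r > 0"
  shows "\<exists>\<D>::nat \<Rightarrow> 'a::metric_space set set. (\<forall>n. discrete_family (\<D> n)) \<and>
          (\<forall>n. \<forall>D\<in>\<D> n. \<exists>c. D \<subseteq> ball c r) \<and> (\<forall>x. \<exists>n. \<exists>D\<in>\<D> n. x \<in> D)"
proof -
  define W where "W = card_of (UNIV :: 'a set)"
  have wo: "well_order_on UNIV W" unfolding W_def by (rule card_of_well_order_on)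
  define R where "R = W - Id"
  have wfR: "wf R" using wo unfolding R_def well_order_on_def by blast
  have tot: "(a, b) \<in> R \<or> (b, a) \<in> R" if "a \<noteq> b" for a b
    using wo that unfolding R_def well_order_on_def linear_order_on_def total_on_def by blast
  define S where "S x = {c::'a. dist x c < r}" for x
  have "\<forall>x. \<exists>z. z \<in> S x \<and> (\<forall>y. (y, z) \<in> R \<longrightarrow> y \<notin> S x)"
  proof
    fix x
    have "x \<in> S x" using assms by (simp add: S_def)
    thus "\<exists>z. z \<in> S x \<and> (\<forall>y. (y, z) \<in> R \<longrightarrow> y \<notin> S x)" using wfE_min[OF wfR, of x "S x"] by blast
  qed
  from choice[OF this] obtain c :: "'a \<Rightarrow> 'a" where c0: "\<forall>x. c x \<in> S x \<and> (\<forall>y. (y, c x) \<in> R \<longrightarrow> y \<notin> S x)" by (rule exE)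
  have c: "\<And>x. c x \<in> S x" "\<And>x y. (y, c x) \<in> R \<Longrightarrow> y \<notin> S x" using c0 by simp_all
  define D where "D n a = {x. c x = a \<and> ball x (1 / real (Suc n)) \<subseteq> ball a r}" for n a
  define \<D> where "\<D> n = range (D n)" for n
  have sep: "\<not> dist x y < 1 / real (Suc n)" if "x \<in> D n a" "y \<in> D n b" "a \<noteq> b" for x y n a b
  proof -
    have "(a,b) \<in> R \<or> (b,a) \<in> R" using tot that(3) by blast
    thus ?thesis
    proof
      assume "(a,b) \<in> R"
      hence "a \<notin> S y" using c(2)[of a y] that(2) unfolding D_def by auto
      hence "y \<notin> ball a r" by (auto simp: S_def dist_commute)
      hence "y \<notin> ball x (1 / real (Suc n))" using that(1) unfolding D_def by blast
      thus ?thesis by (simp add: dist_commute)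
    next
      assume "(b,a) \<in> R"
      hence "b \<notin> S x" using c(2)[of b x] that(1) unfolding D_def by auto
      hence "x \<notin> ball b r" by (auto simp: S_def dist_commute)
      hence "x \<notin> ball y (1 / real (Suc n))" using that(2) unfolding D_def by blast
      thus ?thesis by (simp add: dist_commute)
    qed
  qed
  show ?thesis
  proof (rule exI[of _ \<D>], intro conjI allI ballI)
    fix n
    show "discrete_family (\<D> n)"
      unfolding discrete_family_def
    proof
      fix z :: 'a
      let ?U = "ball z (1 / (2 * real (Suc n)))"
      show "\<exists>U::'a set. open U \<and> z \<in> U \<and> (\<forall>A\<in>\<D> n. \<forall>B\<in>\<D> n. A \<inter> U \<noteq> {} \<and> B \<inter> U \<noteq> {} \<longrightarrow> A = B)"
      proof (intro exI conjI ballI impI)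
        show "open ?U" by simp
        show "z \<in> ?U" by simp
        fix A B assume AB: "A \<in> \<D> n" "B \<in> \<D> n" "A \<inter> ?U \<noteq> {} \<and> B \<inter> ?U \<noteq> {}"
        obtain a b where ab: "A = D n a" "B = D n b" using AB unfolding \<D>_def by blast
        obtain x y where xy: "x \<in> A" "y \<in> B" "dist z x < 1 / (2 * real (Suc n))" "dist z y < 1 / (2 * real (Suc n))"
          using AB(3) by auto
        have "dist x y \<le> dist z x + dist z y" by (metis dist_commute dist_triangle)
        also have "\<dots> < 1 / real (Suc n)"
        proof -
          have hh: "1 / real (Suc n) = 2 * (1 / (2 * real (Suc n)))" by (rule half_inv)
          show ?thesis using xy(3,4) unfolding hh by linarith
        qed
        finally have dxy: "dist x y < 1 / real (Suc n)" .
        show "A = B"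
        proof (rule ccontr)
          assume "A \<noteq> B" hence "a \<noteq> b" using ab by blast
          thus False using sep[of x n a y b] xy ab dxy by blast
        qed
      qed
    qed
  next
    fix n D' assume D'in: "D' \<in> \<D> n"
    show "\<exists>c. D' \<subseteq> ball c r"
    proof -
      obtain a where Da: "D' = D n a" using D'in unfolding \<D>_def by blast
      have "D n a \<subseteq> ball a r"
      proof
        fix x assume "x \<in> D n a"
        hence "ball x (1 / real (Suc n)) \<subseteq> ball a r" by (simp add: D_def)
        moreover have "x \<in> ball x (1 / real (Suc n))" by simp
        ultimately show "x \<in> ball a r" by blast
      qed
      thus ?thesis using Da by blast
    qed
  next
    fix x
    have dx: "dist x (c x) < r" using c(1) by (simp add: S_def)
    then obtain n where n: "1 / real (Suc n) < r - dist x (c x)" using arch1[of "r - dist x (c x)"] by auto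
    have "ball x (1 / real (Suc n)) \<subseteq> ball (c x) r"
    proof
      fix y assume "y \<in> ball x (1 / real (Suc n))"
      hence "dist x y < 1 / real (Suc n)" by simp
      moreover have "dist (c x) y \<le> dist x (c x) + dist x y" by (metis dist_commute dist_triangle)
      ultimately show "y \<in> ball (c x) r" using n by simp
    qed
    hence "x \<in> D n (c x)" unfolding D_def by simp
    thus "\<exists>n. \<exists>D\<in>\<D> n. x \<in> D" unfolding \<D>_def by blast
  qed
qed

lemma LTZ_GL:
  fixes f :: "'a::metric_space \<Rightarrow> 'b::metric_space"
  assumes "LTZ f" shows "gen_lebesgue_property f"
  unfolding gen_lebesgue_property_def
proof (intro allI impI)
  fix \<epsilon>::real assume ep: "\<epsilon> > 0"
  then have ep3: "\<epsilon>/3 > 0" by simp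
  have "\<exists>\<delta>::'a \<Rightarrow> real. (\<forall>x. \<delta> x > 0) \<and> (\<forall>x y. dist x y < min (\<delta> x) (\<delta> y) \<longrightarrow> dist (f x) (f y) < \<epsilon>/3)"
    by (rule assms[unfolded LTZ_def, rule_format, OF ep3])
  then obtain \<delta> :: "'a \<Rightarrow> real" where \<delta>0: "(\<forall>x. \<delta> x > 0) \<and> (\<forall>x y. dist x y < min (\<delta> x) (\<delta> y) \<longrightarrow> dist (f x) (f y) < \<epsilon>/3)"
    by (rule exE)
  have \<delta>: "\<And>x. \<delta> x > 0" "\<And>x y. dist x y < min (\<delta> x) (\<delta> y) \<Longrightarrow> dist (f x) (f y) < \<epsilon>/3"
    using \<delta>0 by simp_all
  have "\<forall>n. \<exists>\<D>::nat \<Rightarrow> 'a set set. (\<forall>m. discrete_family (\<D> m)) \<and> (\<forall>m. \<forall>D\<in>\<D> m. \<exists>c. D \<subseteq> ball c (1 / (2 * real (Suc n)))) \<and> (\<forall>x. \<exists>m. \<exists>D\<in>\<D> m. x \<in> D)"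
    by (intro allI stone_cover) simp
  from choice[OF this] obtain SD :: "nat \<Rightarrow> nat \<Rightarrow> 'a set set" where SD0: "\<forall>n. (\<forall>m. discrete_family (SD n m)) \<and> (\<forall>m. \<forall>D\<in>SD n m. \<exists>c. D \<subseteq> ball c (1 / (2 * real (Suc n)))) \<and> (\<forall>x. \<exists>m. \<exists>D\<in>SD n m. x \<in> D)"
    by (rule exE)
  have SD: "\<And>n m. discrete_family (SD n m)"
    "\<And>n m D. D \<in> SD n m \<Longrightarrow> \<exists>c. D \<subseteq> ball c (1 / (2 * real (Suc n)))"
    "\<And>n x. \<exists>m. \<exists>D\<in>SD n m. x \<in> D"
    using SD0 by simp_all
  define Xn where "Xn n = {x. \<delta> x > 1 / real (Suc n)}" for n
  define Fam where "Fam k = (\<lambda>D. closure (D \<inter> Xn (fst (prod_decode k)))) ` SD (fst (prod_decode k)) (snd (prod_decode k))" for k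
  have approx: "\<exists>x\<in>D \<inter> Xn n. dist (f a) (f x) < \<epsilon>/3" if a_cl: "a \<in> closure (D \<inter> Xn n)" for a D n
  proof -
    have "min (\<delta> a) (1 / real (Suc n)) > 0" using \<delta>(1) by simp
    then obtain y where y: "y \<in> D \<inter> Xn n" "dist y a < min (\<delta> a) (1 / real (Suc n))"
      using a_cl unfolding closure_approachable by blast
    have "\<delta> y > 1 / real (Suc n)" using y(1) by (simp add: Xn_def)
    hence "dist a y < min (\<delta> a) (\<delta> y)" using y(2) by (simp add: dist_commute)
    thus ?thesis using \<delta>(2) y(1) by blast
  qed
  have fam_disc: "sigma_discrete (\<Union>(range Fam))"
  proof -
    have "discrete_family (Fam k)" for k
    proof -
      let ?n = "fst (prod_decode k)" and ?m = "snd (prod_decode k)"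
      show ?thesis unfolding discrete_family_def
      proof
        fix z
        obtain U where U: "open U" "z \<in> U" "\<forall>A\<in>SD ?n ?m. \<forall>B\<in>SD ?n ?m. A \<inter> U \<noteq> {} \<and> B \<inter> U \<noteq> {} \<longrightarrow> A = B"
          by (rule discrete_familyD[OF SD(1)[of ?n ?m]])
        show "\<exists>U. open U \<and> z \<in> U \<and> (\<forall>A\<in>Fam k. \<forall>B\<in>Fam k. A \<inter> U \<noteq> {} \<and> B \<inter> U \<noteq> {} \<longrightarrow> A = B)"
        proof (intro exI conjI ballI impI)
          show "open U" "z \<in> U" using U by auto
          fix A B assume AB: "A \<in> Fam k" "B \<in> Fam k" "A \<inter> U \<noteq> {} \<and> B \<inter> U \<noteq> {}"
          then obtain DA DB where DD: "DA \<in> SD ?n ?m" "DB \<in> SD ?n ?m" "A = closure (DA \<inter> Xn ?n)" "B = closure (DB \<inter> Xn ?n)"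
            unfolding Fam_def by blast
          have "U \<inter> (DA \<inter> Xn ?n) \<noteq> {}" using AB(3) DD(3) open_Int_closure_eq_empty[OF U(1)] by (auto simp: Int_commute)
          hence "DA \<inter> U \<noteq> {}" by blast
          moreover have "U \<inter> (DB \<inter> Xn ?n) \<noteq> {}" using AB(3) DD(4) open_Int_closure_eq_empty[OF U(1)] by (auto simp: Int_commute)
          hence "DB \<inter> U \<noteq> {}" by blast
          ultimately have "DA = DB" using U(3)[rule_format, OF DD(1,2)] by blast
          thus "A = B" using DD by simp
        qed
      qed
    qed
    thus "sigma_discrete (\<Union>(range Fam))" unfolding sigma_discrete_def by (intro exI[of _ Fam] conjI allI refl)
  qed
  have fam_cb: "closed A \<and> bounded (f ` A) \<and> diameter (f ` A) \<le> \<epsilon>" if Ain: "A \<in> \<Union>(range Fam)" for A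
  proof -
    from Ain obtain k D where kD: "D \<in> SD (fst (prod_decode k)) (snd (prod_decode k))" "A = closure (D \<inter> Xn (fst (prod_decode k)))"
      unfolding Fam_def by blast
    have clA: "closed A" using kD by simp
    let ?n = "fst (prod_decode k)"
    obtain c where c: "D \<subseteq> ball c (1 / (2 * real (Suc ?n)))" using SD(2)[OF kD(1)] by blast
    have "dist a b \<le> \<epsilon>" if ha: "a \<in> f ` A" and hb: "b \<in> f ` A" for a b
    proof -
      obtain a' b' where ab: "a = f a'" "b = f b'" "a' \<in> A" "b' \<in> A" using ha hb by blast
      obtain x where x: "x \<in> D \<inter> Xn ?n" "dist (f a') (f x) < \<epsilon>/3" using approx ab(3) kD(2) by blast
      obtain y where y: "y \<in> D \<inter> Xn ?n" "dist (f b') (f y) < \<epsilon>/3" using approx ab(4) kD(2) by blast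
      have "dist c x < 1 / (2 * real (Suc ?n))" "dist c y < 1 / (2 * real (Suc ?n))" using c x(1) y(1) by auto
      moreover have "dist x y \<le> dist c x + dist c y" by (metis dist_commute dist_triangle)
      moreover have hh: "1 / real (Suc ?n) = 2 * (1 / (2 * real (Suc ?n)))" by (rule half_inv)
      ultimately have "dist x y < 1 / real (Suc ?n)" unfolding hh by linarith
      moreover have "\<delta> x > 1 / real (Suc ?n)" "\<delta> y > 1 / real (Suc ?n)" using x(1) y(1) by (auto simp: Xn_def)
      ultimately have "dist (f x) (f y) < \<epsilon>/3" using \<delta>(2) by simp
      moreover have "dist (f a') (f b') \<le> dist (f a') (f x) + dist (f x) (f y) + dist (f y) (f b')"
        by (metis dist_triangle add.commute add_left_mono order_trans)
      ultimately show ?thesis using x(2) y(2) ab by (simp add: dist_commute)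
    qed
    hence "bounded (f ` A) \<and> diameter (f ` A) \<le> \<epsilon>" using ep by (intro diam_bound) auto
    thus ?thesis using clA by simp
  qed
  have fam_cov: "\<Union>(\<Union>(range Fam)) = UNIV"
    proof (rule set_eqI, rule iffI)
      fix x :: 'a
      obtain n where n: "1 / real (Suc n) < \<delta> x" using arch1 \<delta>(1) by blast
      obtain m D where mD: "D \<in> SD n m" "x \<in> D" using SD(3) by blast
      have "x \<in> closure (D \<inter> Xn n)" using mD n closure_subset by (fastforce simp: Xn_def)
      moreover have "closure (D \<inter> Xn n) \<in> Fam (prod_encode (n, m))" unfolding Fam_def using mD by simp
      ultimately show "x \<in> \<Union>(\<Union>(range Fam))" by blast
    qed simp
  show "\<exists>\<A>::'a set set. sigma_discrete \<A> \<and> (\<forall>A\<in>\<A>. closed A) \<and> \<Union>\<A> = UNIV \<and> (\<forall>A\<in>\<A>. bounded (f ` A) \<and> diameter (f ` A) \<le> \<epsilon>)"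
    by (rule exI[of _ "\<Union>(range Fam)"]) (simp add: fam_disc fam_cov fam_cb)
qed


lemma GL_B1:
  fixes f :: "'a::topological_space \<Rightarrow> 'b::metric_space"
  assumes GL: "gen_lebesgue_property f" shows "borel1 f"
  unfolding borel1_def
proof (intro allI impI)
  fix V :: "'b set" assume V: "open V"
  have "\<forall>k. \<exists>D::nat \<Rightarrow> 'a set set. (\<forall>n. discrete_family (D n)) \<and> (\<forall>n. \<forall>A\<in>D n. closed A)
     \<and> (\<forall>x. \<exists>n. \<exists>A\<in>D n. x \<in> A) \<and> (\<forall>n. \<forall>A\<in>D n. bounded (f ` A) \<and> diameter (f ` A) \<le> 1 / real (Suc k))"
  proof
    fix k
    have pos: "1 / real (Suc k) > 0" by simp
    obtain D :: "nat \<Rightarrow> 'a set set" where D1: "\<And>n. discrete_family (D n)" and D2: "\<And>n A. A \<in> D n \<Longrightarrow> closed A"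
      and D3: "\<And>x. \<exists>n. \<exists>A\<in>D n. x \<in> A" and D4: "\<And>n A. A \<in> D n \<Longrightarrow> bounded (f ` A) \<and> diameter (f ` A) \<le> 1 / real (Suc k)"
      by (rule GL_D[OF GL pos]) blast
    show "\<exists>D::nat \<Rightarrow> 'a set set. (\<forall>n. discrete_family (D n)) \<and> (\<forall>n. \<forall>A\<in>D n. closed A)
     \<and> (\<forall>x. \<exists>n. \<exists>A\<in>D n. x \<in> A) \<and> (\<forall>n. \<forall>A\<in>D n. bounded (f ` A) \<and> diameter (f ` A) \<le> 1 / real (Suc k))"
      by (intro exI[of _ D] conjI allI ballI D1 D2 D3 D4)
  qed
  from choice[OF this] obtain DD :: "nat \<Rightarrow> nat \<Rightarrow> 'a set set" where DD0: "\<forall>k. (\<forall>n. discrete_family (DD k n)) \<and> (\<forall>n. \<forall>A\<in>DD k n. closed A)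
     \<and> (\<forall>x. \<exists>n. \<exists>A\<in>DD k n. x \<in> A) \<and> (\<forall>n. \<forall>A\<in>DD k n. bounded (f ` A) \<and> diameter (f ` A) \<le> 1 / real (Suc k))"
    by (rule exE)
  have DD1: "\<And>k n. discrete_family (DD k n)" and DD2: "\<And>k n A. A \<in> DD k n \<Longrightarrow> closed A"
    and DD3: "\<And>k x. \<exists>n. \<exists>A\<in>DD k n. x \<in> A"
    and DD4: "\<And>k n A. A \<in> DD k n \<Longrightarrow> bounded (f ` A) \<and> diameter (f ` A) \<le> 1 / real (Suc k)"
    using DD0 by simp_all
  define C where "C j = \<Union>{A \<in> DD (fst (prod_decode j)) (snd (prod_decode j)). f ` A \<subseteq> V}" for j
  have Cclosed: "closed (C j)" for j
    unfolding C_def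
  proof (rule discrete_family_closed_Union)
    show "discrete_family {A \<in> DD (fst (prod_decode j)) (snd (prod_decode j)). f ` A \<subseteq> V}"
      by (rule discrete_family_subset[OF DD1]) auto
    show "closed A" if "A \<in> {A \<in> DD (fst (prod_decode j)) (snd (prod_decode j)). f ` A \<subseteq> V}" for A
      using that by (auto intro: DD2)
  qed
  have eq: "f -` V = \<Union>(range C)"
  proof
    show "\<Union>(range C) \<subseteq> f -` V" unfolding C_def by auto
    show "f -` V \<subseteq> \<Union>(range C)"
    proof
      fix x assume "x \<in> f -` V"
      hence "f x \<in> V" by simp
      then obtain e where e: "e > 0" "ball (f x) e \<subseteq> V" using V by (metis openE)
      obtain k where k: "1 / real (Suc k) < e" using arch1[OF e(1)] by (rule exE)
      obtain n where "\<exists>A\<in>DD k n. x \<in> A" using DD3[of k x] by (rule exE)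
      then obtain A where A: "A \<in> DD k n" "x \<in> A" by (rule bexE)
      have "f ` A \<subseteq> V"
      proof
        fix y assume "y \<in> f ` A"
        then obtain a where a: "a \<in> A" "y = f a" by (rule imageE)
        have "dist (f x) (f a) \<le> diameter (f ` A)"
          using DD4[OF A(1)] A(2) a(1) by (intro diameter_bounded_bound) auto
        also have "\<dots> \<le> 1 / real (Suc k)" using DD4[OF A(1)] by simp
        finally have "dist (f x) y < e" using k a(2) by simp
        thus "y \<in> V" using e(2) by (auto simp: subset_iff)
      qed
      hence "x \<in> C (prod_encode (k, n))" unfolding C_def using A by auto
      thus "x \<in> \<Union>(range C)" by (rule UN_I[rotated]) simp
    qed
  qed
  show "fsigma (f -` V)" unfolding eq by (rule fsigma.intros) (rule Cclosed)
qed

lemma B1_FR: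
  fixes f :: "'a::metric_space \<Rightarrow> 'b::metric_space"
  assumes HB: "hereditarily_baire TYPE('a)" and B: "borel1 f"
  shows "fragmentable f"
  unfolding fragmentable_def
proof (intro allI impI)
  fix \<epsilon>::real and F :: "'a set"
  assume ep: "\<epsilon> > 0" and F: "closed F \<and> F \<noteq> {}"
  show "\<exists>U. open U \<and> U \<inter> F \<noteq> {} \<and> bounded (f ` (U \<inter> F)) \<and> diameter (f ` (U \<inter> F)) < \<epsilon>"
  proof (rule ccontr)
    assume neg: "\<not> ?thesis"
    have pick: "\<exists>z. z \<in> F \<and> dist q z < 1 / real (Suc k) \<and> \<epsilon>/3 \<le> dist (f q) (f z)" if q: "q \<in> F" for q k
    proof (rule ccontr)
      assume "\<not> ?thesis"
      hence all: "dist (f q) (f z) < \<epsilon>/3" if "z \<in> ball q (1 / real (Suc k)) \<inter> F" for z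
        using that by (auto simp: not_le)
      let ?U = "ball q (1 / real (Suc k))"
      have "bounded (f ` (?U \<inter> F)) \<and> diameter (f ` (?U \<inter> F)) \<le> 2*\<epsilon>/3"
      proof (rule diam_bound)
        fix u v assume "u \<in> f ` (?U \<inter> F)" "v \<in> f ` (?U \<inter> F)"
        then obtain a b where ab: "a \<in> ?U \<inter> F" "b \<in> ?U \<inter> F" "u = f a" "v = f b" by blast
        have "dist u v \<le> dist (f q) u + dist (f q) v" by (metis dist_commute dist_triangle)
        also have "\<dots> < \<epsilon>/3 + \<epsilon>/3" using all[OF ab(1)] all[OF ab(2)] ab(3,4) by simp
        finally show "dist u v \<le> 2*\<epsilon>/3" by simp
      qed (use ep in simp)
      moreover have "q \<in> ?U \<inter> F" using q by simp
      hence "?U \<inter> F \<noteq> {}" by blast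
      moreover have "open ?U" by simp
      ultimately have "open ?U \<and> ?U \<inter> F \<noteq> {} \<and> bounded (f ` (?U \<inter> F)) \<and> diameter (f ` (?U \<inter> F)) < \<epsilon>"
        using ep by linarith
      thus False using neg by blast
    qed
    have "\<forall>q. \<exists>p. \<forall>k. q \<in> F \<longrightarrow> p k \<in> F \<and> dist q (p k) < 1 / real (Suc k) \<and> \<epsilon>/3 \<le> dist (f q) (f (p k))"
    proof
      fix q
      show "\<exists>p. \<forall>k. q \<in> F \<longrightarrow> p k \<in> F \<and> dist q (p k) < 1 / real (Suc k) \<and> \<epsilon>/3 \<le> dist (f q) (f (p k))"
      proof (cases "q \<in> F")
        case True
        have "\<forall>k. \<exists>z. z \<in> F \<and> dist q z < 1 / real (Suc k) \<and> \<epsilon>/3 \<le> dist (f q) (f z)"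
          using pick[OF True] by blast
        from choice[OF this] show ?thesis by simp
      qed simp
    qed
    from choice[OF this] obtain p :: "'a \<Rightarrow> nat \<Rightarrow> 'a" where p0: "\<forall>q. \<forall>k. q \<in> F \<longrightarrow> p q k \<in> F \<and> dist q (p q k) < 1 / real (Suc k) \<and> \<epsilon>/3 \<le> dist (f q) (f (p q k))"
      by (rule exE)
    have p: "p q k \<in> F" "dist q (p q k) < 1 / real (Suc k)" "\<epsilon>/3 \<le> dist (f q) (f (p q k))" if "q \<in> F" for q k
      using p0 that by simp_all
    obtain x0 where x0: "x0 \<in> F" using F by blast
    define walk where "walk ks = foldr (\<lambda>k q. p q k) ks x0" for ks :: "nat list"
    have walk_Cons: "walk (k # ks) = p (walk ks) k" for k ks by (simp add: walk_def)
    have walkF: "walk ks \<in> F" for ks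
      by (induction ks) (simp_all add: walk_Cons p(1) x0, simp add: walk_def x0)
    define Q where "Q = range walk"
    define M where "M = closure Q"
    have QF: "Q \<subseteq> F" using walkF by (auto simp: Q_def)
    have Mc: "closed M" by (simp add: M_def)
    have Mne: "M \<noteq> {}" unfolding M_def Q_def by simp
    have MF: "M \<subseteq> F" unfolding M_def using QF F by (simp add: closure_minimal)
    have "\<forall>ks. \<exists>C::nat \<Rightarrow> 'a set. (\<forall>j. closed (C j)) \<and> f -` ball (f (walk ks)) (\<epsilon>/6) = \<Union>(range C)"
      using B unfolding borel1_def by (intro allI fsigma_E) simp
    from choice[OF this] obtain CQ :: "nat list \<Rightarrow> nat \<Rightarrow> 'a set" where CQ0: "\<forall>ks. (\<forall>j. closed (CQ ks j)) \<and> f -` ball (f (walk ks)) (\<epsilon>/6) = \<Union>(range (CQ ks))"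
      by (rule exE)
    have CQ1: "closed (CQ ks j)" for ks j using conjunct1[OF spec[OF CQ0, of ks]] by (rule spec)
    have CQ2: "f -` ball (f (walk ks)) (\<epsilon>/6) = \<Union>(range (CQ ks))" for ks by (rule conjunct2[OF spec[OF CQ0, of ks]])
    have oc: "open (- closure (f ` Q))" by (rule open_Compl) simp
    have "fsigma (f -` (- closure (f ` Q)))" using B oc unfolding borel1_def by simp
    hence "\<exists>C::nat \<Rightarrow> 'a set. (\<forall>j. closed (C j)) \<and> f -` (- closure (f ` Q)) = \<Union>(range C)"
      by (rule fsigma_E)
    then obtain CV :: "nat \<Rightarrow> 'a set" where CV0: "(\<forall>j. closed (CV j)) \<and> f -` (- closure (f ` Q)) = \<Union>(range CV)"
      by (rule exE)
    have CV1: "closed (CV j)" for j using conjunct1[OF CV0] by (rule spec)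
    have CV2: "f -` (- closure (f ` Q)) = \<Union>(range CV)" by (rule conjunct2[OF CV0])
    define N where "N i = (case i of Inl (ks, j) \<Rightarrow> CQ ks j | Inr j \<Rightarrow> CV j)" for i :: "(nat list \<times> nat) + nat"
    have Nc: "closed (N i)" for i unfolding N_def by (cases i) (auto simp: CQ1 CV1)
    have cov: "M \<subseteq> (\<Union>i. N i)"
    proof
      fix x assume "x \<in> M"
      show "x \<in> (\<Union>i. N i)"
      proof (cases "f x \<in> closure (f ` Q)")
        case True
        have "\<epsilon>/6 > 0" using ep by simp
        then obtain y where y: "y \<in> f ` Q" "dist y (f x) < \<epsilon>/6"
          using True unfolding closure_approachable by blast
        then obtain ks where ks: "y = f (walk ks)" unfolding Q_def by blast
        have "x \<in> f -` ball (f (walk ks)) (\<epsilon>/6)" using y(2) ks by simp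
        then obtain j where "x \<in> CQ ks j" unfolding CQ2 by (rule UN_E)
        hence "x \<in> N (Inl (ks, j))" by (simp add: N_def)
        thus ?thesis by (rule UN_I[rotated]) simp
      next
        case False
        hence "x \<in> f -` (- closure (f ` Q))" by simp
        then obtain j where "x \<in> CV j" unfolding CV2 by (rule UN_E)
        hence "x \<in> N (Inr j)" by (simp add: N_def)
        thus ?thesis by (rule UN_I[rotated]) simp
      qed
    qed
    have "\<exists>i G. open G \<and> G \<inter> M \<noteq> {} \<and> G \<inter> M \<subseteq> N i"
      by (rule baire_cover[OF HB Mc Mne Nc cov])
    then obtain i where "\<exists>G. open G \<and> G \<inter> M \<noteq> {} \<and> G \<inter> M \<subseteq> N i" by (rule exE)
    then obtain G where G0: "open G \<and> G \<inter> M \<noteq> {} \<and> G \<inter> M \<subseteq> N i" by (rule exE)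
    have G1: "open G" using G0 by (rule conjunct1)
    have G2: "G \<inter> M \<noteq> {}" using conjunct2[OF G0] by (rule conjunct1)
    have G3: "G \<inter> M \<subseteq> N i" using conjunct2[OF G0] by (rule conjunct2)
    have wQ: "walk ks \<in> Q" for ks by (simp add: Q_def)
    have QM: "Q \<subseteq> M" unfolding M_def by (rule closure_subset)
    have wM: "walk ks \<in> M" for ks using QM wQ by (rule subsetD)
    have "G \<inter> closure Q \<noteq> {}" using G2 by (simp add: M_def)
    hence "G \<inter> Q \<noteq> {}" using open_Int_closure_eq_empty[OF G1, of Q] by simp
    then obtain q0 where q0: "q0 \<in> G" "q0 \<in> Q" by auto
    from q0(2) obtain ks0 where "q0 = walk ks0" unfolding Q_def by (rule rangeE)
    hence ks0: "walk ks0 \<in> G" using q0(1) by simp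
    have q0M: "walk ks0 \<in> M" by (rule wM)
    have G3': "z \<in> N i" if "z \<in> G" "z \<in> M" for z using G3 that by (rule subsetD[OF _ IntI])
    show False
    proof (cases i)
      case (Inr j)
      have "walk ks0 \<in> N i" using ks0 q0M by (rule G3')
      hence "walk ks0 \<in> CV j" by (simp add: N_def Inr)
      hence "walk ks0 \<in> \<Union>(range CV)" by (rule UN_I[rotated]) simp
      hence "walk ks0 \<in> f -` (- closure (f ` Q))" unfolding CV2 .
      hence "f (walk ks0) \<notin> closure (f ` Q)" by simp
      moreover have "f (walk ks0) \<in> closure (f ` Q)"
        using closure_subset imageI[OF wQ[of ks0], of f] by (rule subsetD)
      ultimately show False by (rule notE)
    next
      case (Inl a)
      obtain ks j where i: "i = Inl (ks, j)" using Inl by (cases a) simp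
      obtain e where e: "e > 0" "ball (walk ks0) e \<subseteq> G" using G1 ks0 by (rule openE)
      obtain k where k: "1 / real (Suc k) < e" using arch1[OF e(1)] by (rule exE)
      define q1 where "q1 = walk (k # ks0)"
      have q1p: "q1 = p (walk ks0) k" by (simp add: q1_def walk_Cons)
      have "dist (walk ks0) q1 < e" using p(2)[OF walkF, of ks0 k] k q1p by simp
      hence "q1 \<in> ball (walk ks0) e" by simp
      hence "q1 \<in> G" using e(2) by (rule rev_subsetD)
      moreover have "q1 \<in> M" unfolding q1_def by (rule wM)
      ultimately have "q1 \<in> N i" by (rule G3')
      hence "q1 \<in> CQ ks j" by (simp add: N_def i)
      hence "q1 \<in> \<Union>(range (CQ ks))" by (rule UN_I[rotated]) simp
      hence "q1 \<in> f -` ball (f (walk ks)) (\<epsilon>/6)" unfolding CQ2 .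
      hence d1: "dist (f (walk ks)) (f q1) < \<epsilon>/6" by simp
      have "walk ks0 \<in> N i" using ks0 q0M by (rule G3')
      hence "walk ks0 \<in> CQ ks j" by (simp add: N_def i)
      hence "walk ks0 \<in> \<Union>(range (CQ ks))" by (rule UN_I[rotated]) simp
      hence "walk ks0 \<in> f -` ball (f (walk ks)) (\<epsilon>/6)" unfolding CQ2 .
      hence d0: "dist (f (walk ks)) (f (walk ks0)) < \<epsilon>/6" by simp
      have "dist (f (walk ks0)) (f q1) \<le> dist (f (walk ks)) (f (walk ks0)) + dist (f (walk ks)) (f q1)"
        by (metis dist_commute dist_triangle)
      hence "dist (f (walk ks0)) (f q1) < \<epsilon>/3" using d0 d1 by simp
      moreover have "\<epsilon>/3 \<le> dist (f (walk ks0)) (f q1)" using p(3)[OF walkF, of ks0 k] q1p by simp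
      ultimately show False by simp
    qed
  qed
qed


inductive_set tower :: "('x set \<Rightarrow> 'x set) \<Rightarrow> 'x set set" for g :: "'x set \<Rightarrow> 'x set" where
  tw_succ: "A \<in> tower g \<Longrightarrow> g A \<in> tower g"
| tw_Union: "S \<in> Pow (tower g) \<Longrightarrow> \<Union>S \<in> tower g"
monos Pow_mono

lemma tower_lemma:
  assumes infl: "\<And>A. A \<subseteq> g A"
  shows "A \<in> tower g \<Longrightarrow> B \<in> tower g \<Longrightarrow> B \<subseteq> A \<or> g A \<subseteq> B"
proof -
  define P where "P A \<longleftrightarrow> (\<forall>B\<in>tower g. B \<subseteq> A \<longrightarrow> B = A \<or> g B \<subseteq> A)" for A
  have step1: "B \<subseteq> A \<or> g A \<subseteq> B" if PA: "P A" and B: "B \<in> tower g" for A B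
    using B
  proof (induction B rule: tower.induct)
    case (tw_succ B)
    from tw_succ.IH show ?case
    proof
      assume "B \<subseteq> A"
      then have "B = A \<or> g B \<subseteq> A" using PA tw_succ.hyps unfolding P_def by blast
      then show ?case by auto
    next
      assume "g A \<subseteq> B" then show ?case using infl[of B] by blast
    qed
  next
    case (tw_Union S)
    show ?case
    proof (cases "\<exists>s\<in>S. g A \<subseteq> s")
      case True then show ?thesis by blast
    next
      case False
      hence "\<forall>s\<in>S. s \<subseteq> A" using tw_Union.IH by blast
      then show ?thesis by blast
    qed
  qed
  have step2: "P A" if "A \<in> tower g" for A
    using that
  proof (induction A rule: tower.induct)
    case (tw_succ A)
    show ?case unfolding P_def
    proof (intro ballI impI)
      fix B assume B: "B \<in> tower g" "B \<subseteq> g A"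
      from step1[OF tw_succ.IH B(1)] show "B = g A \<or> g B \<subseteq> g A"
      proof
        assume "B \<subseteq> A"
        hence "B = A \<or> g B \<subseteq> A" using tw_succ.IH B(1) unfolding P_def by blast
        thus ?thesis using infl[of A] by blast
      next
        assume "g A \<subseteq> B" thus ?thesis using B(2) by blast
      qed
    qed
  next
    case (tw_Union S)
    have Stw: "s \<in> tower g" and Ps: "P s" if "s \<in> S" for s using tw_Union.IH that by blast+
    show ?case unfolding P_def
    proof (intro ballI impI)
      fix B assume B: "B \<in> tower g" "B \<subseteq> \<Union>S"
      show "B = \<Union>S \<or> g B \<subseteq> \<Union>S"
      proof (cases "\<exists>s\<in>S. B \<subseteq> s")
        case True
        then obtain s where s: "s \<in> S" "B \<subseteq> s" by blast
        have "B = s \<or> g B \<subseteq> s" using Ps[OF s(1)] B(1) s(2) unfolding P_def by blast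
        thus ?thesis
        proof
          assume Bs: "B = s"
          show ?thesis
          proof (cases "\<exists>s'\<in>S. g s \<subseteq> s'")
            case True thus ?thesis using Bs by blast
          next
            case False
            have "s' \<subseteq> s" if "s' \<in> S" for s'
              using step1[OF Ps[OF s(1)] Stw[OF that]] False that by blast
            thus ?thesis using Bs s(1) by blast
          qed
        next
          assume "g B \<subseteq> s" thus ?thesis using s(1) by blast
        qed
      next
        case False
        have "g s \<subseteq> B" if "s \<in> S" for s
          using step1[OF Ps[OF that] B(1)] False that by blast
        hence "\<Union>S \<subseteq> B" using infl by blast
        thus ?thesis using B(2) by blast
      qed
    qed
  qed
  show "A \<in> tower g \<Longrightarrow> B \<in> tower g \<Longrightarrow> B \<subseteq> A \<or> g A \<subseteq> B" using step1 step2 by blast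
qed

lemma FR_WS:
  fixes f :: "'a::metric_space \<Rightarrow> 'b::metric_space"
  assumes FR: "fragmentable f" shows "weakly_separated f"
  unfolding weakly_separated_def
proof (intro allI impI)
  fix \<epsilon>::real assume ep: "\<epsilon> > 0"
  define good where "good W U \<longleftrightarrow> open U \<and> bounded (f ` (U - W)) \<and> diameter (f ` (U - W)) < \<epsilon>" for W U :: "'a set"
  define g where "g W = W \<union> \<Union>{U. good W U}" for W
  have infl: "A \<subseteq> g A" for A unfolding g_def by blast
  have opn: "open A" if "A \<in> tower g" for A using that
  proof (induction rule: tower.induct)
    case (tw_succ A)
    have "open (\<Union>{U. good A U})" by (rule open_Union) (simp add: good_def)
    thus ?case unfolding g_def using tw_succ.IH by (rule open_Un[rotated])
  next
    case (tw_Union S)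
    thus ?case by (intro open_Union) blast
  qed
  have grow: "\<not> g A \<subseteq> A" if A: "A \<noteq> UNIV" "open A" for A
  proof
    assume gA: "g A \<subseteq> A"
    have "closed (- A) \<and> - A \<noteq> {}" using A by auto
    hence "\<exists>U. open U \<and> U \<inter> - A \<noteq> {} \<and> bounded (f ` (U \<inter> - A)) \<and> diameter (f ` (U \<inter> - A)) < \<epsilon>"
      using FR[unfolded fragmentable_def, rule_format, OF ep] by simp
    then obtain U where U: "open U \<and> U \<inter> - A \<noteq> {} \<and> bounded (f ` (U \<inter> - A)) \<and> diameter (f ` (U \<inter> - A)) < \<epsilon>"
      by (rule exE)
    have "good A U" unfolding good_def using U by (simp add: Diff_eq)
    hence "U \<subseteq> g A" unfolding g_def by blast
    thus False using gA U by blast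
  qed
  define Ox where "Ox x = \<Union>{W \<in> tower g. x \<notin> W}" for x
  have Ot: "Ox x \<in> tower g" for x unfolding Ox_def by (rule tw_Union) blast
  have xO: "x \<notin> Ox x" for x unfolding Ox_def by blast
  have key: "\<exists>U. open U \<and> x \<in> U \<and> good (Ox x) U" for x
  proof -
    have gO: "g (Ox x) \<in> tower g" using Ot by (rule tw_succ)
    have "x \<in> g (Ox x)"
    proof (rule ccontr)
      assume "x \<notin> g (Ox x)"
      hence "g (Ox x) \<subseteq> Ox x" using gO unfolding Ox_def by blast
      moreover have "Ox x \<noteq> UNIV" using xO by blast
      ultimately show False using grow opn[OF Ot] by blast
    qed
    thus ?thesis using xO[of x] unfolding g_def good_def by blast
  qed
  hence "\<forall>x. \<exists>U. open U \<and> x \<in> U \<and> good (Ox x) U" by blast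
  from choice[OF this] obtain U :: "'a \<Rightarrow> 'a set" where U0: "\<forall>x. open (U x) \<and> x \<in> U x \<and> good (Ox x) (U x)"
    by (rule exE)
  have U1: "open (U x)" and U2: "x \<in> U x" and U3: "good (Ox x) (U x)" for x using U0 by simp_all
  have Ug: "U x \<subseteq> g (Ox x)" for x unfolding g_def using U3[of x] by blast
  show "\<exists>V::'a \<Rightarrow> 'a set. (\<forall>x. open (V x) \<and> x \<in> V x) \<and> (\<forall>x y. x \<in> V y \<and> y \<in> V x \<longrightarrow> dist (f x) (f y) < \<epsilon>)"
  proof (intro exI[of _ U] conjI allI impI)
    fix x show "open (U x)" by (rule U1)
    show "x \<in> U x" by (rule U2)
  next
    fix x y assume xy: "x \<in> U y \<and> y \<in> U x"
    have "Ox y \<subseteq> Ox x"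
    proof -
      have "Ox y \<subseteq> Ox x \<or> g (Ox x) \<subseteq> Ox y" by (rule tower_lemma[OF infl Ot Ot])
      moreover have "\<not> g (Ox x) \<subseteq> Ox y" using xy Ug[of x] xO[of y] by blast
      ultimately show ?thesis by blast
    qed
    moreover have "Ox x \<subseteq> Ox y"
    proof -
      have "Ox x \<subseteq> Ox y \<or> g (Ox y) \<subseteq> Ox x" by (rule tower_lemma[OF infl Ot Ot])
      moreover have "\<not> g (Ox y) \<subseteq> Ox x" using xy Ug[of y] xO[of x] by blast
      ultimately show ?thesis by blast
    qed
    ultimately have eq: "Ox x = Ox y" by (rule antisym[rotated])
    have gx: "bounded (f ` (U x - Ox x)) \<and> diameter (f ` (U x - Ox x)) < \<epsilon>" using U3[of x] by (simp add: good_def)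
    have inx: "x \<in> U x - Ox x" using U2[of x] xO[of x] by blast
    have iny: "y \<in> U x - Ox x" using xy xO[of y] eq by blast
    have "dist (f x) (f y) \<le> diameter (f ` (U x - Ox x))"
      using gx inx iny by (intro diameter_bounded_bound) auto
    thus "dist (f x) (f y) < \<epsilon>" using gx by linarith
  qed
qed

lemma FR_PCP:
  fixes f :: "'a::metric_space \<Rightarrow> 'b::metric_space"
  assumes HB: "hereditarily_baire TYPE('a)" and FR: "fragmentable f"
  shows "PCP f"
  unfolding PCP_def
proof (intro allI impI)
  fix F :: "'a set" assume F: "closed F \<and> F \<noteq> {}"
  define On where "On n = \<Union>{G. open G \<and> bounded (f ` (G \<inter> F)) \<and> diameter (f ` (G \<inter> F)) < 1 / real (Suc n)}" for n
  have Oopen: "open (On n)" for n unfolding On_def by (rule open_Union) simp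
  have "\<exists>x\<in>F. \<forall>n. x \<in> On n"
  proof (rule ccontr)
    assume neg: "\<not> ?thesis"
    have cov: "F \<subseteq> (\<Union>n. F - On n)" using neg by blast
    have Nc: "closed (F - On n)" for n using F Oopen by (intro closed_Diff) simp_all
    have "\<exists>n G. open G \<and> G \<inter> F \<noteq> {} \<and> G \<inter> F \<subseteq> F - On n"
      using F by (intro baire_cover[OF HB _ _ Nc cov]) simp_all
    then obtain n where "\<exists>G. open G \<and> G \<inter> F \<noteq> {} \<and> G \<inter> F \<subseteq> F - On n" by (rule exE)
    then obtain G where G0: "open G \<and> G \<inter> F \<noteq> {} \<and> G \<inter> F \<subseteq> F - On n" by (rule exE)
    have G1: "open G" and G2: "G \<inter> F \<noteq> {}" and G3: "G \<inter> F \<subseteq> F - On n" using G0 by simp_all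
    define K where "K = closure (G \<inter> F)"
    have K: "closed K \<and> K \<noteq> {}" using G2 by (simp add: K_def)
    have pos: "1 / real (Suc n) > 0" by simp
    have "\<exists>U. open U \<and> U \<inter> K \<noteq> {} \<and> bounded (f ` (U \<inter> K)) \<and> diameter (f ` (U \<inter> K)) < 1 / real (Suc n)"
      by (rule FR[unfolded fragmentable_def, rule_format, OF pos K])
    then obtain U where U0: "open U \<and> U \<inter> K \<noteq> {} \<and> bounded (f ` (U \<inter> K)) \<and> diameter (f ` (U \<inter> K)) < 1 / real (Suc n)"
      by (rule exE)
    have U1: "open U" and U2: "U \<inter> K \<noteq> {}" and U3: "bounded (f ` (U \<inter> K))"
      and U4: "diameter (f ` (U \<inter> K)) < 1 / real (Suc n)" using U0 by simp_all
    have ne: "U \<inter> (G \<inter> F) \<noteq> {}" using U2 open_Int_closure_eq_empty[OF U1, of "G \<inter> F"] by (simp add: K_def)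
    have sub: "f ` ((U \<inter> G) \<inter> F) \<subseteq> f ` (U \<inter> K)" using closure_subset[of "G \<inter> F"] by (auto simp: K_def)
    have bd: "bounded (f ` ((U \<inter> G) \<inter> F))" using U3 sub by (rule bounded_subset)
    have "diameter (f ` ((U \<inter> G) \<inter> F)) \<le> diameter (f ` (U \<inter> K))" using sub U3 by (rule diameter_subset)
    hence dm: "diameter (f ` ((U \<inter> G) \<inter> F)) < 1 / real (Suc n)" using U4 by linarith
    have UG: "open (U \<inter> G)" using U1 G1 by (rule open_Int)
    have "U \<inter> G \<subseteq> On n" unfolding On_def using UG bd dm by blast
    moreover obtain z where "z \<in> U" "z \<in> G" "z \<in> F" using ne by blast
    ultimately show False using G3 by blast
  qed
  then obtain x where x: "x \<in> F" "\<And>n. x \<in> On n" by blast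
  have "continuous (at x within F) f"
    unfolding continuous_within_eps_delta
  proof (intro allI impI)
    fix e::real assume e: "e > 0"
    obtain n where n: "1 / real (Suc n) < e" using arch1[OF e] by (rule exE)
    from x(2)[of n] obtain G where G: "open G" "bounded (f ` (G \<inter> F))" "diameter (f ` (G \<inter> F)) < 1 / real (Suc n)" "x \<in> G"
      unfolding On_def by blast
    obtain d where d: "d > 0" "ball x d \<subseteq> G" using G(1,4) by (rule openE)
    show "\<exists>d>0. \<forall>x'\<in>F. dist x' x < d \<longrightarrow> dist (f x') (f x) < e"
    proof (intro exI[of _ d] conjI ballI impI)
      show "d > 0" by (rule d(1))
      fix x' assume x': "x' \<in> F" "dist x' x < d"
      hence "x' \<in> G" using d(2) by (auto simp: dist_commute)
      hence "dist (f x') (f x) \<le> diameter (f ` (G \<inter> F))"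
        using G(2,4) x(1) x'(1) by (intro diameter_bounded_bound) auto
      thus "dist (f x') (f x) < e" using G(3) n by linarith
    qed
  qed
  thus "\<exists>x\<in>F. continuous (at x within F) f" using x(1) by blast
qed

lemma PCP_FR:
  fixes f :: "'a::metric_space \<Rightarrow> 'b::metric_space"
  assumes P: "PCP f" shows "fragmentable f"
  unfolding fragmentable_def
proof (intro allI impI)
  fix \<epsilon>::real and F :: "'a set" assume ep: "\<epsilon> > 0" and F: "closed F \<and> F \<noteq> {}"
  have "\<exists>x\<in>F. continuous (at x within F) f" by (rule P[unfolded PCP_def, rule_format, OF F])
  then obtain x where x: "x \<in> F" "continuous (at x within F) f" by (rule bexE)
  have ep3: "\<epsilon>/3 > 0" using ep by simp
  have "\<exists>d>0. \<forall>x'\<in>F. dist x' x < d \<longrightarrow> dist (f x') (f x) < \<epsilon>/3"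
    using x(2) ep3 unfolding continuous_within_eps_delta by blast
  then obtain d where d: "d > 0" "\<forall>x'\<in>F. dist x' x < d \<longrightarrow> dist (f x') (f x) < \<epsilon>/3" by blast
  have bd: "bounded (f ` (ball x d \<inter> F)) \<and> diameter (f ` (ball x d \<inter> F)) \<le> 2*\<epsilon>/3"
  proof (rule diam_bound)
    fix u v assume "u \<in> f ` (ball x d \<inter> F)" "v \<in> f ` (ball x d \<inter> F)"
    then obtain a b where ab: "a \<in> ball x d \<inter> F" "b \<in> ball x d \<inter> F" "u = f a" "v = f b" by blast
    have "dist (f a) (f x) < \<epsilon>/3" using d(2) ab(1) by (auto simp: dist_commute)
    moreover have "dist (f b) (f x) < \<epsilon>/3" using d(2) ab(2) by (auto simp: dist_commute)
    moreover have "dist u v \<le> dist u (f x) + dist v (f x)" by (rule dist_triangle2)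
    ultimately show "dist u v \<le> 2*\<epsilon>/3" using ab(3,4) by simp
  qed (use ep in simp)
  have "x \<in> ball x d \<inter> F" using x(1) d(1) by simp
  hence "ball x d \<inter> F \<noteq> {}" by blast
  thus "\<exists>U. open U \<and> U \<inter> F \<noteq> {} \<and> bounded (f ` (U \<inter> F)) \<and> diameter (f ` (U \<inter> F)) < \<epsilon>"
    using bd ep by (intro exI[of _ "ball x d"]) auto
qed


lemma L_GL:
  fixes f :: "'a::topological_space \<Rightarrow> 'b::metric_space"
  assumes L: "lebesgue_property f" shows "gen_lebesgue_property f"
  unfolding gen_lebesgue_property_def
proof (intro allI impI)
  fix \<epsilon>::real assume ep: "\<epsilon> > 0"
  have "\<exists>X::nat \<Rightarrow> 'a set. (\<forall>n. closed (X n)) \<and> \<Union>(range X) = UNIV \<and> (\<forall>n. bounded (f ` X n) \<and> diameter (f ` X n) \<le> \<epsilon>)"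
    by (rule L[unfolded lebesgue_property_def, rule_format, OF ep])
  then obtain X :: "nat \<Rightarrow> 'a set" where X0: "(\<forall>n. closed (X n)) \<and> \<Union>(range X) = UNIV \<and> (\<forall>n. bounded (f ` X n) \<and> diameter (f ` X n) \<le> \<epsilon>)"
    by (rule exE)
  have X1: "closed (X n)" and X3: "bounded (f ` X n) \<and> diameter (f ` X n) \<le> \<epsilon>" for n using X0 by simp_all
  have X2: "\<Union>(range X) = UNIV" using X0 by simp
  have disc: "discrete_family {A}" for A :: "'a set"
    unfolding discrete_family_def by (intro allI exI[of _ UNIV]) simp
  have sd: "sigma_discrete (range X)"
    unfolding sigma_discrete_def by (intro exI[of _ "\<lambda>n. {X n}"] conjI allI disc) auto
  show "\<exists>\<A>::'a set set. sigma_discrete \<A> \<and> (\<forall>A\<in>\<A>. closed A) \<and> \<Union>\<A> = UNIV \<and> (\<forall>A\<in>\<A>. bounded (f ` A) \<and> diameter (f ` A) \<le> \<epsilon>)"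
    by (rule exI[of _ "range X"]) (simp add: sd X1 X2 X3)
qed

lemma dense_countable:
  fixes dummy :: "'a::metric_space"
  assumes "separable_space (euclidean :: 'a topology)"
  obtains C :: "'a set" where "countable C" "closure C = UNIV"
proof -
  have "\<exists>C::'a set. countable C \<and> C \<subseteq> topspace euclidean \<and> euclidean closure_of C = topspace euclidean"
    using assms unfolding separable_space_def .
  then obtain C :: "'a set" where C: "countable C \<and> C \<subseteq> topspace euclidean \<and> euclidean closure_of C = topspace euclidean"
    by (rule exE)
  have "countable C" "closure C = UNIV" using C by simp_all
  thus thesis by (rule that)
qed

lemma discrete_countable:
  fixes \<D> :: "'a::metric_space set set" and C :: "'a set"
  assumes C: "countable C" "closure C = UNIV" and D: "discrete_family \<D>"
  shows "countable {A \<in> \<D>. A \<noteq> {}}"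
proof -
  have ex: "\<exists>p::'a \<times> real. fst p \<in> C \<and> snd p \<in> \<rat> \<and> A \<inter> ball (fst p) (snd p) \<noteq> {} \<and> (\<forall>B\<in>\<D>. B \<inter> ball (fst p) (snd p) \<noteq> {} \<longrightarrow> B = A)"
    if A: "A \<in> \<D>" "A \<noteq> {}" for A
  proof -
    obtain a where a: "a \<in> A" using A(2) by blast
    obtain U where U: "open U" "a \<in> U" "\<forall>A\<in>\<D>. \<forall>B\<in>\<D>. A \<inter> U \<noteq> {} \<and> B \<inter> U \<noteq> {} \<longrightarrow> A = B"
      by (rule discrete_familyD[OF D])
    obtain r where r: "r > 0" "ball a r \<subseteq> U" using U(1,2) by (rule openE)
    have r3: "r/3 > 0" using r(1) by simp
    have "a \<in> closure C" using C(2) by simp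
    then obtain d where d: "d \<in> C" "dist d a < r/3" using r3 unfolding closure_approachable by blast
    obtain q where q: "q \<in> \<rat>" "r/3 < q" "q < 2*r/3" using Rats_dense_in_real[of "r/3" "2*r/3"] r(1) by auto
    have sub: "ball d q \<subseteq> ball a r"
    proof
      fix z assume "z \<in> ball d q"
      hence "dist d z < q" by simp
      moreover have "dist a z \<le> dist d a + dist d z" by (metis dist_commute dist_triangle)
      ultimately show "z \<in> ball a r" using d(2) q(3) by simp
    qed
    have ain: "a \<in> ball d q" using d(2) q(2) by simp
    have m1: "A \<inter> ball d q \<noteq> {}" using a ain by blast
    have m2: "\<forall>B\<in>\<D>. B \<inter> ball d q \<noteq> {} \<longrightarrow> B = A"
    proof (intro ballI impI)
      fix B assume B: "B \<in> \<D>" "B \<inter> ball d q \<noteq> {}"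
      have "B \<inter> U \<noteq> {}" using B(2) sub r(2) by blast
      moreover have "A \<inter> U \<noteq> {}" using m1 sub r(2) by blast
      ultimately show "B = A" using U(3)[rule_format, OF B(1) A(1)] by blast
    qed
    show ?thesis using d(1) q(1) m1 m2 by (intro exI[of _ "(d, q)"]) simp
  qed
  define h where "h A = (SOME p::'a \<times> real. fst p \<in> C \<and> snd p \<in> \<rat> \<and> A \<inter> ball (fst p) (snd p) \<noteq> {} \<and> (\<forall>B\<in>\<D>. B \<inter> ball (fst p) (snd p) \<noteq> {} \<longrightarrow> B = A))" for A
  have h: "fst (h A) \<in> C \<and> snd (h A) \<in> \<rat> \<and> A \<inter> ball (fst (h A)) (snd (h A)) \<noteq> {} \<and> (\<forall>B\<in>\<D>. B \<inter> ball (fst (h A)) (snd (h A)) \<noteq> {} \<longrightarrow> B = A)"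
    if "A \<in> \<D>" "A \<noteq> {}" for A
    unfolding h_def by (rule someI_ex[OF ex[OF that]])
  have inj: "inj_on h {A \<in> \<D>. A \<noteq> {}}"
  proof (rule inj_onI)
    fix A B assume A: "A \<in> {A \<in> \<D>. A \<noteq> {}}" and B: "B \<in> {A \<in> \<D>. A \<noteq> {}}" and eq: "h A = h B"
    have hA: "fst (h A) \<in> C \<and> snd (h A) \<in> \<rat> \<and> A \<inter> ball (fst (h A)) (snd (h A)) \<noteq> {} \<and> (\<forall>B\<in>\<D>. B \<inter> ball (fst (h A)) (snd (h A)) \<noteq> {} \<longrightarrow> B = A)"
      using A by (intro h) simp_all
    have hB: "B \<inter> ball (fst (h B)) (snd (h B)) \<noteq> {}" using B h[of B] by simp
    have BD: "B \<in> \<D>" using B by simp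
    have Bb: "B \<inter> ball (fst (h A)) (snd (h A)) \<noteq> {}" using hB eq by simp
    have allB: "\<forall>B\<in>\<D>. B \<inter> ball (fst (h A)) (snd (h A)) \<noteq> {} \<longrightarrow> B = A"
      using hA[THEN conjunct2, THEN conjunct2, THEN conjunct2] .
    have "B = A" using allB[rule_format, OF BD Bb] .
    thus "A = B" by (rule sym)
  qed
  have img: "h ` {A \<in> \<D>. A \<noteq> {}} \<subseteq> C \<times> \<rat>"
  proof
    fix p assume "p \<in> h ` {A \<in> \<D>. A \<noteq> {}}"
    then obtain A where A: "A \<in> \<D>" "A \<noteq> {}" "p = h A" by blast
    have "fst (h A) \<in> C" "snd (h A) \<in> \<rat>" using h[OF A(1,2)] by simp_all
    thus "p \<in> C \<times> \<rat>" using A(3) by (simp add: mem_Times_iff)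
  qed
  have "countable (C \<times> \<rat>)" using C(1) countable_rat by (rule countable_SIGMA)
  hence "countable (h ` {A \<in> \<D>. A \<noteq> {}})" using img by (rule countable_subset[rotated])
  thus ?thesis using inj by (rule countable_image_inj_on)
qed

lemma GL_L_sepX:
  fixes f :: "'a::metric_space \<Rightarrow> 'b::metric_space"
  assumes sep: "separable_space (euclidean :: 'a topology)" and GL: "gen_lebesgue_property f"
  shows "lebesgue_property f"
  unfolding lebesgue_property_def
proof (intro allI impI)
  fix \<epsilon>::real assume ep: "\<epsilon> > 0"
  obtain C :: "'a set" where C: "countable C" "closure C = UNIV" by (rule dense_countable[OF sep])
  obtain D :: "nat \<Rightarrow> 'a set set" where D1: "\<And>n. discrete_family (D n)" and D2: "\<And>n A. A \<in> D n \<Longrightarrow> closed A"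
    and D3: "\<And>x. \<exists>n. \<exists>A\<in>D n. x \<in> A" and D4: "\<And>n A. A \<in> D n \<Longrightarrow> bounded (f ` A) \<and> diameter (f ` A) \<le> \<epsilon>"
    by (rule GL_D[OF GL ep]) blast
  define AA where "AA = (\<Union>n. {A \<in> D n. A \<noteq> {}})"
  have cAA: "countable AA" unfolding AA_def
    by (rule countable_UN) (simp_all add: discrete_countable[OF C D1])
  have cov: "\<exists>A\<in>AA. x \<in> A" for x
  proof -
    obtain n where "\<exists>A\<in>D n. x \<in> A" using D3[of x] by (rule exE)
    then obtain A where "A \<in> D n" "x \<in> A" by (rule bexE)
    thus ?thesis unfolding AA_def by blast
  qed
  have ne: "AA \<noteq> {}" using cov[of undefined] by blast
  define X where "X = from_nat_into AA"
  have XA: "X n \<in> AA" for n unfolding X_def using ne by (rule from_nat_into)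
  have AAD: "\<exists>m. A \<in> D m" if "A \<in> AA" for A using that unfolding AA_def by blast
  show "\<exists>X::nat \<Rightarrow> 'a set. (\<forall>n. closed (X n)) \<and> \<Union>(range X) = UNIV \<and> (\<forall>n. bounded (f ` X n) \<and> diameter (f ` X n) \<le> \<epsilon>)"
  proof (intro exI[of _ X] conjI allI)
    fix n
    obtain m where m: "X n \<in> D m" using AAD[OF XA[of n]] by (rule exE)
    show "closed (X n)" using m by (rule D2)
    show "bounded (f ` X n)" using D4[OF m] by simp
    show "diameter (f ` X n) \<le> \<epsilon>" using D4[OF m] by simp
  next
    show "\<Union>(range X) = UNIV"
    proof (rule set_eqI, rule iffI)
      fix x :: 'a
      obtain A where A: "A \<in> AA" "x \<in> A" using cov[of x] by (rule bexE)
      obtain n where "X n = A" unfolding X_def using from_nat_into_surj[OF cAA A(1)] by (rule exE)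
      thus "x \<in> \<Union>(range X)" using A(2) by blast
    qed simp
  qed
qed

lemma B1_L_sepY:
  fixes f :: "'a::metric_space \<Rightarrow> 'b::metric_space"
  assumes sep: "separable_space (euclidean :: 'b topology)" and B: "borel1 f"
  shows "lebesgue_property f"
  unfolding lebesgue_property_def
proof (intro allI impI)
  fix \<epsilon>::real assume ep: "\<epsilon> > 0"
  obtain C :: "'b set" where C: "countable C" "closure C = UNIV" by (rule dense_countable[OF sep])
  have Cne: "C \<noteq> {}" using C(2) by auto
  have "\<forall>c. \<exists>F::nat \<Rightarrow> 'a set. (\<forall>j. closed (F j)) \<and> f -` ball c (\<epsilon>/2) = \<Union>(range F)"
  proof
    fix c :: 'b
    have "fsigma (f -` ball c (\<epsilon>/2))" using B unfolding borel1_def by simp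
    thus "\<exists>F::nat \<Rightarrow> 'a set. (\<forall>j. closed (F j)) \<and> f -` ball c (\<epsilon>/2) = \<Union>(range F)" by (rule fsigma_E)
  qed
  from choice[OF this] obtain F :: "'b \<Rightarrow> nat \<Rightarrow> 'a set" where F0: "\<forall>c. (\<forall>j. closed (F c j)) \<and> f -` ball c (\<epsilon>/2) = \<Union>(range (F c))"
    by (rule exE)
  have F1: "closed (F c j)" for c j using conjunct1[OF spec[OF F0, of c]] by (rule spec)
  have F2: "f -` ball c (\<epsilon>/2) = \<Union>(range (F c))" for c by (rule conjunct2[OF spec[OF F0, of c]])
  define X where "X k = F (from_nat_into C (fst (prod_decode k))) (snd (prod_decode k))" for k
  show "\<exists>X::nat \<Rightarrow> 'a set. (\<forall>n. closed (X n)) \<and> \<Union>(range X) = UNIV \<and> (\<forall>n. bounded (f ` X n) \<and> diameter (f ` X n) \<le> \<epsilon>)"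
  proof (intro exI[of _ X] conjI allI)
    fix n
    show "closed (X n)" unfolding X_def by (rule F1)
    let ?c = "from_nat_into C (fst (prod_decode n))"
    have sub: "X n \<subseteq> f -` ball ?c (\<epsilon>/2)" unfolding X_def F2 by blast
    have "bounded (f ` X n) \<and> diameter (f ` X n) \<le> \<epsilon>"
    proof (rule diam_bound)
      fix u v assume "u \<in> f ` X n" "v \<in> f ` X n"
      hence "dist ?c u < \<epsilon>/2" "dist ?c v < \<epsilon>/2" using sub by auto
      moreover have "dist u v \<le> dist ?c u + dist ?c v" by (metis dist_commute dist_triangle)
      ultimately show "dist u v \<le> \<epsilon>" by simp
    qed (use ep in simp)
    thus "bounded (f ` X n)" "diameter (f ` X n) \<le> \<epsilon>" by simp_all
  next
    show "\<Union>(range X) = UNIV"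
    proof (rule set_eqI, rule iffI)
      fix x :: 'a
      have "f x \<in> closure C" using C(2) by simp
      moreover have "\<epsilon>/2 > 0" using ep by simp
      ultimately obtain c where c: "c \<in> C" "dist c (f x) < \<epsilon>/2" unfolding closure_approachable by blast
      obtain i where i: "from_nat_into C i = c" using from_nat_into_surj[OF C(1) c(1)] by (rule exE)
      have "x \<in> f -` ball c (\<epsilon>/2)" using c(2) by simp
      then obtain j where j: "x \<in> F c j" unfolding F2 by (rule UN_E)
      have "X (prod_encode (i, j)) = F c j" unfolding X_def using i by simp
      thus "x \<in> \<Union>(range X)" using j by blast
    qed simp
  qed
qed

theorem corollary2p6:
  fixes f :: "'a::metric_space \<Rightarrow> 'b::metric_space"
  assumes "hereditarily_baire TYPE('a)"
  shows "(gen_lebesgue_property f \<longleftrightarrow> weakly_separated f)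
       \<and> (gen_lebesgue_property f \<longleftrightarrow> LTZ f)
       \<and> (gen_lebesgue_property f \<longleftrightarrow> PCP f)
       \<and> (gen_lebesgue_property f \<longleftrightarrow> borel1 f)
       \<and> (gen_lebesgue_property f \<longleftrightarrow> fragmentable f)
       \<and> (separable_space (euclidean :: 'a topology) \<or> separable_space (euclidean :: 'b topology)
            \<longrightarrow> (gen_lebesgue_property f \<longleftrightarrow> lebesgue_property f))"
proof -
  have WS_GL: "weakly_separated f \<Longrightarrow> gen_lebesgue_property f" by (intro LTZ_GL WS_LTZ)
  have FR_GL: "fragmentable f \<Longrightarrow> gen_lebesgue_property f" by (intro WS_GL FR_WS)
  have GL_FR: "gen_lebesgue_property f \<Longrightarrow> fragmentable f" by (intro B1_FR[OF assms] GL_B1)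
  have 1: "gen_lebesgue_property f \<longleftrightarrow> weakly_separated f" using GL_WS WS_GL by blast
  have 2: "gen_lebesgue_property f \<longleftrightarrow> LTZ f" using LTZ_GL GL_WS WS_LTZ by blast
  have 3: "gen_lebesgue_property f \<longleftrightarrow> PCP f" using PCP_FR FR_PCP[OF assms] FR_GL GL_FR by blast
  have 4: "gen_lebesgue_property f \<longleftrightarrow> borel1 f" using GL_B1 B1_FR[OF assms] FR_GL by blast
  have 5: "gen_lebesgue_property f \<longleftrightarrow> fragmentable f" using FR_GL GL_FR by blast
  have 6: "gen_lebesgue_property f \<longleftrightarrow> lebesgue_property f"
    if "separable_space (euclidean :: 'a topology) \<or> separable_space (euclidean :: 'b topology)"
    using that L_GL GL_L_sepX B1_L_sepY GL_B1 by blast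
  show ?thesis using 1 2 3 4 5 6 by blast
qed


end
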